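(* Let $P\in(0,1)$ and $h(x)=P^{1/(1+x)}$ for $x\ge0$. Then $h$ is increasing on $[0,\infty)$ and $$h''(x)\ge-\frac{(\sqrt3-3)^4\,e^{\sqrt3-3}}{\sqrt3\,(\ln P)^2}\qquad\text{for all }x\ge0.$$ Consequently, for $K\ge1$, $\mu_1,\dots,\mu_K>0$ and $P_1,\dots,P_K\in(0,1)$, the function $f(\boldsymbol x)=\sum_{k=1}^K\mu_kP_k^{1/(1+x_k)}$ on $\mathbb{R}_+^K$ satisfies, for every $\boldsymbol x_0\in\mathbb{R}_+^K$, $f(\boldsymbol x)\ge\zeta(\boldsymbol x|\boldsymbol x_0)$ for all $\boldsymbol x\in\mathbb{R}_+^K$ with equality at $\boldsymbol x=\boldsymbol x_0$, where $$\zeta(\boldsymbol x|\boldsymbol x_0)=\sum_{k=1}^K\mu_k\Big(P_k^{1/(1+x_{0,k})}-\frac{P_k^{1/(1+x_{0,k})}\ln P_k}{(1+x_{0,k})^2}(x_k-x_{0,k})-\frac{(\sqrt3-3)^4e^{\sqrt3-3}}{2\sqrt3(\ln P_k)^2}(x_k-x_{0,k})^2\Big),$$ which is a concave function of $\boldsymbol x$.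
   Context: $\mathbb{R}_+=[0,\infty)$; $P_k$ plays the role of the false-alarm probability on subcarrier $k$ and $P_k^{1/(1+x_k)}$ is the detection probability at SINR $x_k$. *)

theory Defs
  imports "HOL-Analysis.Analysis"
begin

definition hdet :: "real \<Rightarrow> real \<Rightarrow> real" where
  "hdet P x = P powr (1 / (1 + x))"

definition cbound :: real where
  "cbound = (sqrt 3 - 3) ^ 4 * exp (sqrt 3 - 3) / sqrt 3"

definition nonneg_orthant :: "(real ^ 'k) set" where
  "nonneg_orthant = {x. \<forall>k. 0 \<le> x $ k}"

definition fobj :: "real ^ 'k \<Rightarrow> real ^ 'k \<Rightarrow> real ^ 'k::finite \<Rightarrow> real" where
  "fobj \<mu> P x = (\<Sum>k\<in>UNIV. \<mu> $ k * P $ k powr (1 / (1 + x $ k)))"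

definition zeta :: "real ^ 'k \<Rightarrow> real ^ 'k \<Rightarrow> real ^ 'k \<Rightarrow> real ^ 'k::finite \<Rightarrow> real" where
  "zeta \<mu> P x0 x = (\<Sum>k\<in>UNIV. \<mu> $ k *
     (P $ k powr (1 / (1 + x0 $ k))
      - P $ k powr (1 / (1 + x0 $ k)) * ln (P $ k) / (1 + x0 $ k)^2 * (x $ k - x0 $ k)
      - cbound / (2 * (ln (P $ k))^2) * (x $ k - x0 $ k)^2))"

end

theory Submission imports Defs begin


definition gg :: "real \<Rightarrow> real" where "gg s = exp (-s) * s ^ 3 * (s - 2)"

lemma gg_deriv: "(gg has_real_derivative exp (-s) * s ^ 2 * (6 * s - s ^ 2 - 6)) (at s)"
  unfolding gg_def
  by (auto intro!: derivative_eq_intros simp: algebra_simps power2_eq_square power3_eq_cube)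

lemma s0_val: "gg (3 - sqrt 3) = - cbound"
proof -
  have s3: "sqrt 3 * sqrt 3 = (3::real)" by simp
  have "(3 - sqrt 3)^4 / sqrt 3 = (3 - sqrt 3)^3 * (sqrt 3 - 1)"
  proof -
    have "(3 - sqrt 3) = sqrt 3 * (sqrt 3 - 1)" using s3 by (simp add: algebra_simps)
    moreover have "(3 - sqrt 3)^4 = (3 - sqrt 3)^3 * (3 - sqrt (3::real))"
      by (simp add: eval_nat_numeral)
    ultimately have "(3 - sqrt 3)^4 = (3 - sqrt 3)^3 * (sqrt 3 * (sqrt 3 - 1))"
      by simp
    thus ?thesis by (simp add: field_simps)
  qed
  moreover have "(sqrt 3 - 3)^4 = (3 - sqrt 3)^(4::nat)"
  proof -
    have "(sqrt 3 - 3)^4 = (- (3 - sqrt 3))^(4::nat)" by simp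
    also have "\<dots> = (3 - sqrt 3)^4" by (rule power_minus_even) simp
    finally show ?thesis .
  qed
  ultimately have cb: "cbound = exp (sqrt 3 - 3) * ((3 - sqrt 3)^3 * (sqrt 3 - 1))"
  proof -
    assume e1: "(3 - sqrt 3)^4 / sqrt 3 = (3 - sqrt 3)^3 * (sqrt 3 - 1)"
      and e2: "(sqrt 3 - 3)^4 = (3 - sqrt 3)^(4::nat)"
    have "cbound = exp (sqrt 3 - 3) * ((3 - sqrt 3)^4 / sqrt 3)"
      unfolding cbound_def e2 by (simp only: mult.commute times_divide_eq_right)
    then show ?thesis unfolding e1 .
  qed
  have "gg (3 - sqrt 3) = exp (sqrt 3 - 3) * (3 - sqrt 3)^3 * (1 - sqrt 3)"
    unfolding gg_def by simp
  then show ?thesis unfolding cb by (simp add: algebra_simps)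
qed

lemma poly_sign1: "0 \<le> s \<Longrightarrow> s \<le> 3 - sqrt 3 \<Longrightarrow> 6 * s - s ^ 2 - 6 \<le> (0::real)"
proof -
  assume a: "0 \<le> s" "s \<le> 3 - sqrt 3"
  have "6 * s - s ^ 2 - 6 = - (s - (3 - sqrt 3)) * (s - (3 + sqrt 3))"
    by (simp add: algebra_simps power2_eq_square)
  moreover have "sqrt 3 \<ge> 0" by simp
  moreover have "3 - sqrt 3 - s \<ge> 0" "s - (3 + sqrt 3) \<le> 0" using a \<open>sqrt 3 \<ge> 0\<close> by linarith+
  ultimately show ?thesis by (simp add: mult_nonneg_nonpos)
qed

lemma poly_sign2: "3 - sqrt 3 \<le> s \<Longrightarrow> s \<le> 2 \<Longrightarrow> 6 * s - s ^ 2 - 6 \<ge> (0::real)"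
proof -
  assume a: "3 - sqrt 3 \<le> s" "s \<le> 2"
  have "6 * s - s ^ 2 - 6 = - (s - (3 - sqrt 3)) * (s - (3 + sqrt 3))"
    by (simp add: algebra_simps power2_eq_square)
  moreover have "sqrt 3 \<ge> 0" by simp
  ultimately show ?thesis using a by (simp add: mult_nonneg_nonneg mult_nonpos_nonpos)
qed

lemma gg_bound: assumes "0 \<le> s" shows "gg s \<ge> - cbound"
proof -
  consider "s \<le> 3 - sqrt 3" | "3 - sqrt 3 \<le> s" "s \<le> 2" | "2 \<le> s" by linarith
  then show ?thesis
  proof cases
    case 1
    have "gg (3 - sqrt 3) \<le> gg s"
    proof (rule DERIV_nonpos_imp_nonincreasing[of s "3 - sqrt 3" gg])
      show "s \<le> 3 - sqrt 3" by fact
      fix t assume t: "s \<le> t" "t \<le> 3 - sqrt 3"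
      have "6 * t - t ^ 2 - 6 \<le> 0" using poly_sign1 t assms by simp
      hence "exp (-t) * t ^ 2 * (6 * t - t ^ 2 - 6) \<le> 0"
        by (simp add: mult_nonneg_nonpos)
      thus "\<exists>y. DERIV gg t :> y \<and> y \<le> 0" using gg_deriv by blast
    qed
    then show ?thesis using s0_val by simp
  next
    case 2
    have "gg (3 - sqrt 3) \<le> gg s"
    proof (rule DERIV_nonneg_imp_nondecreasing[of "3 - sqrt 3" s gg])
      show "3 - sqrt 3 \<le> s" using 2 by simp
      fix t assume t: "3 - sqrt 3 \<le> t" "t \<le> s"
      have "6 * t - t ^ 2 - 6 \<ge> 0" using poly_sign2 t 2 by simp
      hence "exp (-t) * t ^ 2 * (6 * t - t ^ 2 - 6) \<ge> 0"
        by (simp)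
      thus "\<exists>y. DERIV gg t :> y \<and> y \<ge> 0" using gg_deriv by blast
    qed
    then show ?thesis using s0_val by simp
  next
    case 3
    have "gg s \<ge> 0" unfolding gg_def using 3 by simp
    moreover have "cbound \<ge> 0" unfolding cbound_def by simp
    ultimately show ?thesis by linarith
  qed
qed

definition h1 :: "real \<Rightarrow> real \<Rightarrow> real" where
  "h1 L y = - L * exp (L / (1 + y)) / (1 + y) ^ 2"
definition h2 :: "real \<Rightarrow> real \<Rightarrow> real" where
  "h2 L y = exp (L / (1 + y)) * L * (2 * (1 + y) + L) / (1 + y) ^ 4"

lemma hdet_exp: "0 < p \<Longrightarrow> hdet p = (\<lambda>y. exp (ln p / (1 + y)))"
  by (auto simp: hdet_def powr_def)

lemma inner_d: assumes ne: "1 + y \<noteq> (0::real)"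
  shows "((\<lambda>y. L / (1 + y)) has_real_derivative (0 * (1 + y) - L * (0 + 1)) / ((1 + y) * (1 + y))) (at y)"
  by (rule DERIV_divide[OF DERIV_const DERIV_add[OF DERIV_const DERIV_ident] ne])

lemma d0: assumes "y > -1" shows "((\<lambda>y. exp (L / (1 + y))) has_real_derivative h1 L y) (at y)"
proof -
  have ne: "1 + y \<noteq> 0" using assms by simp
  have "((\<lambda>y. exp (L / (1 + y))) has_real_derivative
      exp (L / (1 + y)) * ((0 * (1 + y) - L * (0 + 1)) / ((1 + y) * (1 + y)))) (at y)"
    by (rule DERIV_chain'[OF inner_d[OF ne] DERIV_exp])
  moreover have "exp (L / (1 + y)) * ((0 * (1 + y) - L * (0 + 1)) / ((1 + y) * (1 + y))) = h1 L y"
    unfolding h1_def by (simp add: power2_eq_square)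
  ultimately show ?thesis by simp
qed

lemma alg1: "a \<noteq> 0 \<Longrightarrow>
  ((- L * (E * ((0 * a - L * (0 + 1)) / (a * a)))) * a ^ 2 - (- L * E) * (of_nat 2 * ((0 + 1) * a ^ (2 - Suc 0))))
   / (a ^ 2 * a ^ 2) = E * L * (2 * a + L) / a ^ 4" for a E L :: real
  by (simp add: field_simps power2_eq_square power4_eq_xxxx)

lemma d1: assumes "y > -1" shows "(h1 L has_real_derivative h2 L y) (at y)"
proof -
  have ne: "1 + y \<noteq> 0" using assms by simp
  have e: "((\<lambda>y. exp (L / (1 + y))) has_real_derivative
      exp (L / (1 + y)) * ((0 * (1 + y) - L * (0 + 1)) / ((1 + y) * (1 + y)))) (at y)"
    by (rule DERIV_chain'[OF inner_d[OF ne] DERIV_exp])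
  have "((\<lambda>y. (- L * exp (L / (1 + y))) / (1 + y) ^ 2) has_real_derivative
     ((- L * (exp (L / (1 + y)) * ((0 * (1 + y) - L * (0 + 1)) / ((1 + y) * (1 + y))))) * (1 + y) ^ 2
      - (- L * exp (L / (1 + y))) * (of_nat 2 * ((0 + 1) * (1 + y) ^ (2 - Suc 0))))
     / ((1 + y) ^ 2 * (1 + y) ^ 2)) (at y)"
    by (rule DERIV_divide[OF DERIV_cmult[OF e] DERIV_power[OF DERIV_add[OF DERIV_const DERIV_ident]]])
      (use ne in simp)
  note der = DERIV_cong[OF this alg1[OF ne, of L "exp (L / (1 + y))"]]
  have hf: "h1 L = (\<lambda>y. (- L * exp (L / (1 + y))) / (1 + y) ^ 2)"
    unfolding h1_def by auto
  show ?thesis unfolding hf h2_def by (rule der)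
qed

lemma alg: "a \<noteq> 0 \<Longrightarrow> E * (-L / a) ^ 3 * (-L / a - 2) = E * L * (2 * a + L) / a ^ 4 * L ^ 2"
  for a E L :: real
  by (simp add: field_simps power_divide) (simp add: algebra_simps power2_eq_square power3_eq_cube power4_eq_xxxx)

lemma h2_bound: assumes "L < 0" "x \<ge> 0" shows "h2 L x \<ge> - cbound / L ^ 2"
proof -
  define s where "s = - L / (1 + x)"
  have s0: "s \<ge> 0" unfolding s_def using assms by (intro divide_nonneg_pos) auto
  have ex: "exp (-s) = exp (L / (1 + x))" unfolding s_def by simp
  have p: "1 + x > 0" using assms by simp
  have "gg s = exp (L / (1 + x)) * (-L / (1 + x)) ^ 3 * (-L / (1 + x) - 2)"
    unfolding gg_def s_def by simp
  also have "\<dots> = h2 L x * L ^ 2"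
    unfolding h2_def using p alg[of "1 + x" "exp (L / (1 + x))" L] by simp
  finally have "h2 L x * L ^ 2 = gg s" by simp
  hence "h2 L x * L ^ 2 \<ge> - cbound" using gg_bound[OF s0] by simp
  moreover have "L ^ 2 > 0" using assms by simp
  ultimately show ?thesis by (simp add: field_simps)
qed

lemma hdet_d1: "0 < p \<Longrightarrow> y > -1 \<Longrightarrow> (hdet p has_real_derivative h1 (ln p) y) (at y)"
  unfolding hdet_exp by (rule d0)

lemma deriv_hdet: "0 < p \<Longrightarrow> y > -1 \<Longrightarrow> deriv (hdet p) y = h1 (ln p) y"
  by (rule DERIV_imp_deriv[OF hdet_d1])

lemma hdet_d2: assumes "0 < p" "x > -1"
  shows "(deriv (hdet p) has_real_derivative h2 (ln p) x) (at x)"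
proof (rule has_field_derivative_transform_within_open[OF d1[OF assms(2)]])
  show "open ({-1<..} :: real set)" by simp
  show "x \<in> {-1<..}" using assms by simp
  fix y :: real assume "y \<in> {-1<..}"
  thus "h1 (ln p) y = deriv (hdet p) y" using deriv_hdet assms by simp
qed

lemma sum2: "(\<Sum>m<2. f m) = f 0 + f (1::nat)" for f :: "nat \<Rightarrow> real"
  by (simp add: numeral_2_eq_2)

lemma term_ineq:
  fixes q x x0 :: real
  assumes q: "0 < q" "q < 1" and x: "x \<ge> 0" and x0: "x0 \<ge> 0"
  shows "q powr (1 / (1 + x)) \<ge> q powr (1 / (1 + x0)) - q powr (1 / (1 + x0)) * ln q / (1 + x0)^2 * (x - x0)
      - cbound / (2 * (ln q)^2) * (x - x0)^2"
proof (cases "x = x0")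
  case True
  show ?thesis unfolding True by simp
next
  case False
  define L where "L = ln q"
  have L: "L < 0" unfolding L_def using q by simp
  define diff where "diff = (\<lambda>m::nat. if m = 0 then hdet q else if m = 1 then h1 L else h2 L)"
  have "\<exists>t. (if x < x0 then x < t \<and> t < x0 else x0 < t \<and> t < x) \<and>
    hdet q x = (\<Sum>m<2. (diff m x0 / fact m) * (x - x0)^m) + (diff 2 t / fact 2) * (x - x0)^2"
  proof (rule Taylor[of 2 diff "hdet q" "min x x0" "max x x0" x0 x])
    show "\<forall>m t. m < 2 \<and> min x x0 \<le> t \<and> t \<le> max x x0 \<longrightarrow> DERIV (diff m) t :> diff (Suc m) t"
    proof (intro allI impI)
      fix m :: nat and t :: real
      assume a: "m < 2 \<and> min x x0 \<le> t \<and> t \<le> max x x0"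
      hence t: "t > -1" using x x0 by linarith
      from a have "m = 0 \<or> m = 1" by auto
      then show "DERIV (diff m) t :> diff (Suc m) t"
      proof
        assume "m = 0" thus ?thesis using hdet_d1[OF q(1) t] unfolding diff_def L_def by simp
      next
        assume "m = 1" thus ?thesis using d1[OF t] unfolding diff_def L_def by simp
      qed
    qed
  qed (use False in \<open>simp_all add: diff_def\<close>)
  then obtain t where t: "(if x < x0 then x < t \<and> t < x0 else x0 < t \<and> t < x)"
    and eq: "hdet q x = (\<Sum>m<2. (diff m x0 / fact m) * (x - x0)^m) + (diff 2 t / fact 2) * (x - x0)^2"
    by blast
  have t0: "t \<ge> 0" proof (cases "x < x0")
    case True thus ?thesis using t x by simp
  next
    case False thus ?thesis using t x0 by simp
  qed
  have eq2: "hdet q x = hdet q x0 + h1 L x0 * (x - x0) + h2 L t / 2 * (x - x0)^2"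
    using eq sum2[of "\<lambda>m. (diff m x0 / fact m) * (x - x0)^m"] by (simp add: diff_def)
  have hb: "h2 L t \<ge> - cbound / L^2" using h2_bound[OF L t0] .
  have "h2 L t / 2 * (x - x0)^2 \<ge> (- cbound / L^2) / 2 * (x - x0)^2"
    using hb by (intro mult_right_mono divide_right_mono) auto
  have h1e: "h1 L x0 * (x - x0) = - (q powr (1 / (1 + x0)) * ln q / (1 + x0)^2 * (x - x0))"
    unfolding h1_def L_def using q by (simp add: powr_def)
  have ce: "(- cbound / L^2) / 2 * (x - x0)^2 = - (cbound / (2 * (ln q)^2) * (x - x0)^2)"
    unfolding L_def by simp
  have "hdet q x0 = q powr (1 / (1 + x0))" "hdet q x = q powr (1 / (1 + x))"
    unfolding hdet_def by simp_all
  then show ?thesis using eq2 h1e ce \<open>h2 L t / 2 * (x - x0)^2 \<ge> (- cbound / L^2) / 2 * (x - x0)^2\<close>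
    by linarith
qed

lemma quad_concave:
  fixes u v a b w A B C :: real
  assumes "u \<ge> 0" "v \<ge> 0" "u + v = 1" "C \<ge> 0"
  shows "A - B * ((u * a + v * b) - w) - C * ((u * a + v * b) - w)^2 \<ge>
     u * (A - B * (a - w) - C * (a - w)^2) + v * (A - B * (b - w) - C * (b - w)^2)"
proof -
  have v: "v = 1 - u" using assms by simp
  have "(A - B * ((u * a + v * b) - w) - C * ((u * a + v * b) - w)^2) -
     (u * (A - B * (a - w) - C * (a - w)^2) + v * (A - B * (b - w) - C * (b - w)^2))
     = C * (u * v * (a - b)^2)"
    unfolding v by (simp add: algebra_simps power2_eq_square)
  moreover have "C * (u * v * (a - b)^2) \<ge> 0" using assms by simp
  ultimately show ?thesis by linarith
qed

lemma convex_orthant: "convex (nonneg_orthant :: (real ^ 'k) set)"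
  unfolding convex_def nonneg_orthant_def by (auto intro!: add_nonneg_nonneg)


lemma cbound_nonneg: "cbound \<ge> 0" unfolding cbound_def by simp

theorem mainTheorem7:
  fixes \<mu> P :: "real ^ 'k::finite"
  assumes mu_pos: "\<And>k. 0 < \<mu> $ k"
      and P_pos: "\<And>k. 0 < P $ k" and P_lt1: "\<And>k. P $ k < 1"
  shows "(\<forall>p::real. 0 < p \<and> p < 1 \<longrightarrow>
            strict_mono_on {0..} (hdet p) \<and>
            (\<forall>x\<ge>0. (hdet p has_real_derivative deriv (hdet p) x) (at x) \<and>
                    (deriv (hdet p) has_real_derivative deriv (deriv (hdet p)) x) (at x) \<and>
                    deriv (deriv (hdet p)) x \<ge> - cbound / (ln p)^2))
       \<and> (\<forall>x0 \<in> nonneg_orthant.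
            (\<forall>x \<in> nonneg_orthant. fobj \<mu> P x \<ge> zeta \<mu> P x0 x)
            \<and> fobj \<mu> P x0 = zeta \<mu> P x0 x0
            \<and> concave_on nonneg_orthant (zeta \<mu> P x0))"
proof (intro conjI allI impI ballI)
  fix p :: real assume p: "0 < p \<and> p < 1"
  have L: "ln p < 0" using p by simp
  have h1pos: "h1 (ln p) y > 0" if "y \<ge> 0" for y
  proof -
    have "- ln p * exp (ln p / (1 + y)) > 0" using L by (simp add: mult_neg_pos)
    moreover have "(1 + y) ^ 2 > 0" using that by simp
    ultimately show ?thesis unfolding h1_def by (simp add: divide_neg_pos)
  qed
  show "strict_mono_on {0..} (hdet p)"
  proof (rule strict_mono_onI)
    fix a b :: real assume ab: "a \<in> {0..}" "b \<in> {0..}" "a < b"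
    show "hdet p a < hdet p b"
    proof (rule DERIV_pos_imp_increasing[OF ab(3)])
      fix t assume t: "a \<le> t" "t \<le> b"
      hence t0: "t \<ge> 0" using ab by simp
      show "\<exists>y. DERIV (hdet p) t :> y \<and> y > 0"
        using hdet_d1[of p t] h1pos[OF t0] p t0 by auto
    qed
  qed
  fix x :: real assume x: "x \<ge> 0"
  have x1: "x > -1" using x by simp
  have p0: "0 < p" using p by simp
  show "(hdet p has_real_derivative deriv (hdet p) x) (at x)"
    unfolding deriv_hdet[OF p0 x1] by (rule hdet_d1[OF p0 x1])
  have dd: "deriv (deriv (hdet p)) x = h2 (ln p) x"
    by (rule DERIV_imp_deriv[OF hdet_d2[OF p0 x1]])
  show "(deriv (hdet p) has_real_derivative deriv (deriv (hdet p)) x) (at x)"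
    unfolding dd by (rule hdet_d2[OF p0 x1])
  show "deriv (deriv (hdet p)) x \<ge> - cbound / (ln p)^2"
    unfolding dd by (rule h2_bound[OF L x])
next
  fix x0 x :: "real ^ 'k" assume x0: "x0 \<in> nonneg_orthant" and x: "x \<in> nonneg_orthant"
  show "fobj \<mu> P x \<ge> zeta \<mu> P x0 x"
    unfolding fobj_def zeta_def
  proof (rule sum_mono)
    fix k
    have "P $ k powr (1 / (1 + x $ k)) \<ge> P $ k powr (1 / (1 + x0 $ k))
      - P $ k powr (1 / (1 + x0 $ k)) * ln (P $ k) / (1 + x0 $ k)^2 * (x $ k - x0 $ k)
      - cbound / (2 * (ln (P $ k))^2) * (x $ k - x0 $ k)^2"
      by (rule term_ineq[OF P_pos P_lt1]) (use x x0 in \<open>auto simp: nonneg_orthant_def\<close>)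
    then show "\<mu> $ k * (P $ k powr (1 / (1 + x0 $ k))
      - P $ k powr (1 / (1 + x0 $ k)) * ln (P $ k) / (1 + x0 $ k)^2 * (x $ k - x0 $ k)
      - cbound / (2 * (ln (P $ k))^2) * (x $ k - x0 $ k)^2) \<le> \<mu> $ k * P $ k powr (1 / (1 + x $ k))"
      using mu_pos[of k] by (intro mult_left_mono) auto
  qed
next
  fix x0 :: "real ^ 'k" assume x0: "x0 \<in> nonneg_orthant"
  show "fobj \<mu> P x0 = zeta \<mu> P x0 x0"
    unfolding fobj_def zeta_def by simp
  show "concave_on nonneg_orthant (zeta \<mu> P x0)"
    unfolding concave_on_iff
  proof (intro conjI ballI allI impI convex_orthant)
    fix x y :: "real ^ 'k" and u v :: real
    assume uv: "u \<ge> 0" "v \<ge> 0" "u + v = 1"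
    define T where "T = (\<lambda>k z. P $ k powr (1 / (1 + x0 $ k))
      - P $ k powr (1 / (1 + x0 $ k)) * ln (P $ k) / (1 + x0 $ k)^2 * (z - x0 $ k)
      - cbound / (2 * (ln (P $ k))^2) * (z - x0 $ k)^2)"
    have Z: "zeta \<mu> P x0 z = (\<Sum>k\<in>UNIV. \<mu> $ k * T k (z $ k))" for z
      unfolding zeta_def T_def ..
    have "u * zeta \<mu> P x0 x + v * zeta \<mu> P x0 y
        = (\<Sum>k\<in>UNIV. u * (\<mu> $ k * T k (x $ k)) + v * (\<mu> $ k * T k (y $ k)))"
      unfolding Z by (simp add: sum_distrib_left sum.distrib)
    also have "\<dots> \<le> (\<Sum>k\<in>UNIV. \<mu> $ k * T k ((u *\<^sub>R x + v *\<^sub>R y) $ k))"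
    proof (rule sum_mono)
      fix k
      have C: "cbound / (2 * (ln (P $ k))^2) \<ge> 0" using cbound_nonneg by simp
      have "T k (u * x $ k + v * y $ k) \<ge> u * T k (x $ k) + v * T k (y $ k)"
        unfolding T_def by (rule quad_concave[OF uv C])
      hence "\<mu> $ k * (u * T k (x $ k) + v * T k (y $ k)) \<le> \<mu> $ k * T k (u * x $ k + v * y $ k)"
        using mu_pos[of k] by (intro mult_left_mono) auto
      then show "u * (\<mu> $ k * T k (x $ k)) + v * (\<mu> $ k * T k (y $ k))
          \<le> \<mu> $ k * T k ((u *\<^sub>R x + v *\<^sub>R y) $ k)"
        by (simp add: algebra_simps)
    qed
    also have "\<dots> = zeta \<mu> P x0 (u *\<^sub>R x + v *\<^sub>R y)" unfolding Z ..
    finally show "u * zeta \<mu> P x0 x + v * zeta \<mu> P x0 y \<le> zeta \<mu> P x0 (u *\<^sub>R x + v *\<^sub>R y)" .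
  qed
qed

end
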